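(* Let $E$ be an arbitrary directed graph and $R$ a commutative ring with unit. If the Leavitt path algebra $L_R(E)$ is von Neumann regular, then $R$ is von Neumann regular and $E$ contains no cycle.
   Context: A directed graph $E=(E^0,E^1,s,r)$ has vertices $E^0$, edges $E^1$, source and range maps $s,r$. A cycle is a path $e_1\cdots e_n$ ($n\ge1$) with $r(e_i)=s(e_{i+1})$, $s(e_1)=r(e_n)$ and $s(e_i)\ne s(e_j)$ for $i\neq j$. A vertex $v$ is regular if $0<|s^{-1}(v)|<\infty$. The Leavitt path algebra $L_R(E)$ is the $R$-algebra generated by $\{v: v\in E^0\}\cup\{e,e^*: e\in E^1\}$ subject to: $vw=\delta_{v,w}v$; $s(e)e=er(e)=e$; $r(e)e^*=e^*s(e)=e^*$; $e^*f=\delta_{e,f}r(e)$ for $e,f\in E^1$; and $v=\sum_{s(e)=v}ee^*$ for every regular vertex $v$. A ring $A$ is von Neumann regular if $x\in xAx$ for all $x\in A$. *)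

theory Defs
  imports Main
begin

text \<open>Generators of the Leavitt path algebra: vertices, real edges, ghost edges.\<close>
datatype ('v, 'e) gen = GV 'v | GE 'e | GS 'e

text \<open>Elements of the free (non-unital) R-algebra on the generators are finitely
supported functions from words to R (vanishing on the empty word).\<close>

definition gens :: "'v set \<Rightarrow> 'e set \<Rightarrow> ('v, 'e) gen set" where
  "gens V Ed = GV ` V \<union> GE ` Ed \<union> GS ` Ed"

definition free_alg :: "'v set \<Rightarrow> 'e set \<Rightarrow> (('v, 'e) gen list \<Rightarrow> 'r::comm_ring_1) set" where
  "free_alg V Ed = {f. finite {w. f w \<noteq> 0} \<and>
                        (\<forall>w. f w \<noteq> 0 \<longrightarrow> w \<noteq> [] \<and> set w \<subseteq> gens V Ed)}"

definition fa_mult :: "('a list \<Rightarrow> 'r::comm_ring_1) \<Rightarrow> ('a list \<Rightarrow> 'r) \<Rightarrow> ('a list \<Rightarrow> 'r)" where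
  "fa_mult f g = (\<lambda>w. \<Sum>i\<le>length w. f (take i w) * g (drop i w))"

definition mono :: "'a list \<Rightarrow> ('a list \<Rightarrow> 'r::comm_ring_1)" where
  "mono w = (\<lambda>u. if u = w then 1 else 0)"

definition regular_vertex :: "'v set \<Rightarrow> 'e set \<Rightarrow> ('e \<Rightarrow> 'v) \<Rightarrow> 'v \<Rightarrow> bool" where
  "regular_vertex V Ed src v \<longleftrightarrow> v \<in> V \<and> finite {e \<in> Ed. src e = v} \<and> 0 < card {e \<in> Ed. src e = v}"

text \<open>The defining relations of L_R(E), as elements of the free algebra (each relation a = b is encoded as a - b).\<close>
definition lpa_rels :: "'v set \<Rightarrow> 'e set \<Rightarrow> ('e \<Rightarrow> 'v) \<Rightarrow> ('e \<Rightarrow> 'v)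
                        \<Rightarrow> (('v, 'e) gen list \<Rightarrow> 'r::comm_ring_1) set" where
  "lpa_rels V Ed src rng = {\<rho>.
     (\<exists>v\<in>V. \<exists>w\<in>V. \<rho> = (\<lambda>u. mono [GV v, GV w] u - (if v = w then mono [GV v] u else 0))) \<or>
     (\<exists>e\<in>Ed. \<rho> = (\<lambda>u. mono [GV (src e), GE e] u - mono [GE e] u)) \<or>
     (\<exists>e\<in>Ed. \<rho> = (\<lambda>u. mono [GE e, GV (rng e)] u - mono [GE e] u)) \<or>
     (\<exists>e\<in>Ed. \<rho> = (\<lambda>u. mono [GV (rng e), GS e] u - mono [GS e] u)) \<or>
     (\<exists>e\<in>Ed. \<rho> = (\<lambda>u. mono [GS e, GV (src e)] u - mono [GS e] u)) \<or>
     (\<exists>e\<in>Ed. \<exists>f\<in>Ed. \<rho> = (\<lambda>u. mono [GS e, GE f] u - (if e = f then mono [GV (rng e)] u else 0))) \<or>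
     (\<exists>v. regular_vertex V Ed src v \<and>
          \<rho> = (\<lambda>u. mono [GV v] u - (\<Sum>e\<in>{e \<in> Ed. src e = v}. mono [GE e, GS e] u)))}"

inductive_set lpa_ideal :: "'v set \<Rightarrow> 'e set \<Rightarrow> ('e \<Rightarrow> 'v) \<Rightarrow> ('e \<Rightarrow> 'v)
                        \<Rightarrow> (('v, 'e) gen list \<Rightarrow> 'r::comm_ring_1) set"
  for V Ed src rng where
  zero: "(\<lambda>_. 0) \<in> lpa_ideal V Ed src rng"
| gen: "\<rho> \<in> lpa_rels V Ed src rng \<Longrightarrow> set a \<subseteq> gens V Ed \<Longrightarrow> set b \<subseteq> gens V Ed \<Longrightarrow>
        (\<lambda>u. c * fa_mult (fa_mult (mono a) \<rho>) (mono b) u) \<in> lpa_ideal V Ed src rng"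
| add: "x \<in> lpa_ideal V Ed src rng \<Longrightarrow> y \<in> lpa_ideal V Ed src rng \<Longrightarrow>
        (\<lambda>u. x u + y u) \<in> lpa_ideal V Ed src rng"

text \<open>L_R(E) = free_alg / lpa_ideal is von Neumann regular: every class [x] lies in [x] L [x].\<close>
definition lpa_vnr :: "'r::comm_ring_1 itself \<Rightarrow> 'v set \<Rightarrow> 'e set \<Rightarrow> ('e \<Rightarrow> 'v) \<Rightarrow> ('e \<Rightarrow> 'v) \<Rightarrow> bool" where
  "lpa_vnr _ V Ed src rng \<longleftrightarrow>
     (\<forall>x \<in> (free_alg V Ed :: (('v, 'e) gen list \<Rightarrow> 'r) set).
        \<exists>y \<in> free_alg V Ed. (\<lambda>u. x u - fa_mult (fa_mult x y) x u) \<in> lpa_ideal V Ed src rng)"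

definition vnr_ring :: "'r::comm_ring_1 itself \<Rightarrow> bool" where
  "vnr_ring _ \<longleftrightarrow> (\<forall>a::'r. \<exists>b. a = a * b * a)"

definition is_cycle :: "'e set \<Rightarrow> ('e \<Rightarrow> 'v) \<Rightarrow> ('e \<Rightarrow> 'v) \<Rightarrow> 'e list \<Rightarrow> bool" where
  "is_cycle Ed src rng es \<longleftrightarrow> es \<noteq> [] \<and> set es \<subseteq> Ed \<and>
     (\<forall>i. Suc i < length es \<longrightarrow> rng (es ! i) = src (es ! Suc i)) \<and>
     src (hd es) = rng (last es) \<and> distinct (map src es)"

end

theory Submission
  imports Defs
begin


datatype ('v,'e) bp = Fin 'v "'e list" | Inf "nat \<Rightarrow> 'e"

fun bsrc :: "('e\<Rightarrow>'v) \<Rightarrow> ('v,'e) bp \<Rightarrow> 'v" where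
  "bsrc s (Fin v []) = v" | "bsrc s (Fin v (e#l)) = s e" | "bsrc s (Inf p) = s (p 0)"

fun bcons :: "'e \<Rightarrow> ('v,'e) bp \<Rightarrow> ('v,'e) bp" where
  "bcons e (Fin v l) = Fin v (e#l)" | "bcons e (Inf p) = Inf (case_nat e p)"

fun bhd :: "('v,'e) bp \<Rightarrow> ('e \<times> ('v,'e) bp) option" where
  "bhd (Fin v []) = None" | "bhd (Fin v (e#l)) = Some (e, Fin v l)"
| "bhd (Inf p) = Some (p 0, Inf (\<lambda>i. p (Suc i)))"

lemma bhd_bcons[simp]: "bhd (bcons e q) = Some (e,q)"
  by (cases q) auto

lemma bsrc_bcons[simp]: "bsrc s (bcons e q) = s e"
  by (cases q) auto

lemma bhd_Some: assumes "bhd q = Some (e,q')" shows "q = bcons e q'"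
proof (cases q)
  case (Fin v l) then show ?thesis using assms by (cases l) auto
next
  case (Inf p)
  have "case_nat (p 0) (\<lambda>i. p (Suc i)) = p" by (rule ext) (simp split: nat.split)
  then show ?thesis using assms Inf by auto
qed

lemma bcons_inj: "bcons e q1 = bcons e q2 \<Longrightarrow> q1 = q2"
  by (metis bhd_bcons option.inject prod.inject)

lemma bhd_src: "bhd q = Some (e,q') \<Longrightarrow> bsrc s q = s e"
  using bhd_Some by fastforce

fun vfin :: "'e set \<Rightarrow> ('e\<Rightarrow>'v) \<Rightarrow> ('e\<Rightarrow>'v) \<Rightarrow> 'v \<Rightarrow> 'e list \<Rightarrow> bool" where
  "vfin Ed s r v [] = True"
| "vfin Ed s r v (e#l) = (e\<in>Ed \<and> r e = bsrc s (Fin v l) \<and> vfin Ed s r v l)"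

definition valid :: "'v set \<Rightarrow> 'e set \<Rightarrow> ('e\<Rightarrow>'v) \<Rightarrow> ('e\<Rightarrow>'v) \<Rightarrow> ('v,'e) bp \<Rightarrow> bool" where
  "valid V Ed s r q = (case q of Fin v l \<Rightarrow> \<not> regular_vertex V Ed s v \<and> vfin Ed s r v l
     | Inf p \<Rightarrow> (\<forall>i. p i \<in> Ed \<and> r (p i) = s (p (Suc i))))"

lemma valid_bcons: "valid V Ed s r q \<Longrightarrow> e\<in>Ed \<Longrightarrow> r e = bsrc s q \<Longrightarrow> valid V Ed s r (bcons e q)"
proof (cases q)
  case (Inf p)
  assume a: "valid V Ed s r q" "e\<in>Ed" "r e = bsrc s q"
  show ?thesis unfolding Inf using a Inf by (auto simp: valid_def split: nat.split)
qed (auto simp: valid_def)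

lemma valid_bhd: "valid V Ed s r q \<Longrightarrow> bhd q = Some (e,q') \<Longrightarrow> valid V Ed s r q' \<and> e\<in>Ed \<and> r e = bsrc s q'"
proof (cases q)
  case (Fin v l) then show "valid V Ed s r q \<Longrightarrow> bhd q = Some (e,q') \<Longrightarrow> ?thesis"
    by (cases l) (auto simp: valid_def)
qed (auto simp: valid_def)

lemma valid_reg: "valid V Ed s r q \<Longrightarrow> regular_vertex V Ed s (bsrc s q) \<Longrightarrow> bhd q \<noteq> None"
  by (cases q rule: bhd.cases) (auto simp: valid_def)

type_synonym ('v,'e) pt = "('v,'e) bp \<times> int"

fun pa :: "('e\<Rightarrow>'v) \<Rightarrow> ('e\<Rightarrow>'v) \<Rightarrow> ('v,'e) gen \<Rightarrow> ('v,'e) pt \<Rightarrow> ('v,'e) pt option" where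
  "pa s r (GV v) (q,k) = (if bsrc s q = v then Some (q,k) else None)"
| "pa s r (GE e) (q,k) = (case bhd q of None \<Rightarrow> None | Some (e',q') \<Rightarrow> if e' = e then Some (q', k - 1) else None)"
| "pa s r (GS e) (q,k) = (if r e = bsrc s q then Some (bcons e q, k+1) else None)"

fun tau :: "('e\<Rightarrow>'v) \<Rightarrow> ('e\<Rightarrow>'v) \<Rightarrow> ('v,'e) gen list \<Rightarrow> ('v,'e) pt \<Rightarrow> ('v,'e) pt option" where
  "tau s r [] p = Some p"
| "tau s r (a#w) p = (case pa s r a p of None \<Rightarrow> None | Some p' \<Rightarrow> tau s r w p')"

lemma tau_append: "tau s r (u@v) p = (case tau s r u p of None \<Rightarrow> None | Some p' \<Rightarrow> tau s r v p')"
  by (induction u arbitrary: p) (auto split: option.split)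

lemma pa_inj: "pa s r a p1 = Some x \<Longrightarrow> pa s r a p2 = Some x \<Longrightarrow> p1 = p2"
  apply (cases a; cases p1; cases p2)
    apply (auto split: if_splits option.splits prod.splits dest!: bhd_Some bcons_inj)
  done

lemma tau_inj: "tau s r w p1 = Some x \<Longrightarrow> tau s r w p2 = Some x \<Longrightarrow> p1 = p2"
proof (induction w arbitrary: p1 p2)
  case (Cons a w)
  then obtain y1 y2 where "pa s r a p1 = Some y1" "pa s r a p2 = Some y2" "tau s r w y1 = Some x" "tau s r w y2 = Some x"
    by (auto split: option.splits)
  then show ?case using Cons.IH pa_inj by metis
qed simp

lemma pa_valid: "pa s r a (q,k) = Some (q',k') \<Longrightarrow> valid V Ed s r q \<Longrightarrow> a \<in> gens V Ed \<Longrightarrow> valid V Ed s r q'"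
  by (cases a) (auto simp: gens_def split: if_splits option.splits prod.splits
        dest: valid_bhd intro: valid_bcons)

lemma tau_valid: "tau s r w (q,k) = Some (q',k') \<Longrightarrow> valid V Ed s r q \<Longrightarrow> set w \<subseteq> gens V Ed \<Longrightarrow> valid V Ed s r q'"
proof (induction w arbitrary: q k)
  case (Cons a w)
  then show ?case by (auto split: option.splits dest: pa_valid)
qed simp

lemma pa_deg: "pa s r a (q,k) = Some (q',k') \<Longrightarrow> \<bar>k' - k\<bar> \<le> 1"
  by (cases a) (auto split: if_splits option.splits prod.splits)

lemma tau_deg: "tau s r w (q,k) = Some (q',k') \<Longrightarrow> \<bar>k' - k\<bar> \<le> int (length w)"
proof (induction w arbitrary: q k)
  case (Cons a w)
  then obtain q1 k1 where 1: "pa s r a (q,k) = Some (q1,k1)" "tau s r w (q1,k1) = Some (q',k')"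
    by (auto split: option.splits)
  from pa_deg[OF 1(1)] Cons.IH[OF 1(2)] show ?case by simp
qed simp




definition opw :: "('e\<Rightarrow>'v) \<Rightarrow> ('e\<Rightarrow>'v) \<Rightarrow> ('v,'e) gen list \<Rightarrow> (('v,'e) pt \<Rightarrow> 'r::comm_ring_1) \<Rightarrow> ('v,'e) pt \<Rightarrow> 'r" where
  "opw s r w m p = (case tau s r w p of None \<Rightarrow> 0 | Some p' \<Rightarrow> m p')"

definition Op :: "('e\<Rightarrow>'v) \<Rightarrow> ('e\<Rightarrow>'v) \<Rightarrow> (('v,'e) gen list \<Rightarrow> 'r::comm_ring_1) \<Rightarrow> (('v,'e) pt \<Rightarrow> 'r) \<Rightarrow> ('v,'e) pt \<Rightarrow> 'r" where
  "Op s r f m p = (\<Sum>w\<in>{w. f w \<noteq> 0}. f w * opw s r w m p)"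

definition supp :: "('a \<Rightarrow> 'r::zero) \<Rightarrow> 'a set" where "supp f = {w. f w \<noteq> 0}"

lemma Op_sup: "finite S \<Longrightarrow> supp f \<subseteq> S \<Longrightarrow> Op s r f m p = (\<Sum>w\<in>S. f w * opw s r w m p)"
  unfolding Op_def supp_def by (rule sum.mono_neutral_left) auto

lemma Op_diff: "finite (supp f) \<Longrightarrow> finite (supp g) \<Longrightarrow>
   Op s r (\<lambda>u. f u - g u) m p = Op s r f m p - Op s r g m p"
proof -
  assume f: "finite (supp f)" and g: "finite (supp g)"
  let ?S = "supp f \<union> supp g"
  have "Op s r (\<lambda>u. f u - g u) m p = (\<Sum>w\<in>?S. (f w - g w) * opw s r w m p)"
    by (rule Op_sup) (use f g in \<open>auto simp: supp_def\<close>)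
  also have "\<dots> = (\<Sum>w\<in>?S. f w * opw s r w m p) - (\<Sum>w\<in>?S. g w * opw s r w m p)"
    by (simp add: sum_subtractf algebra_simps)
  also have "\<dots> = Op s r f m p - Op s r g m p"
  proof -
    have "Op s r f m p = (\<Sum>w\<in>?S. f w * opw s r w m p)" by (rule Op_sup) (use f g in auto)
    moreover have "Op s r g m p = (\<Sum>w\<in>?S. g w * opw s r w m p)" by (rule Op_sup) (use f g in auto)
    ultimately show ?thesis by simp
  qed
  finally show ?thesis .
qed

lemma Op_add: "finite (supp f) \<Longrightarrow> finite (supp g) \<Longrightarrow>
   Op s r (\<lambda>u. f u + g u) m p = Op s r f m p + Op s r g m p"
proof -
  assume f: "finite (supp f)" and g: "finite (supp g)"
  let ?S = "supp f \<union> supp g"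
  have "Op s r (\<lambda>u. f u + g u) m p = (\<Sum>w\<in>?S. (f w + g w) * opw s r w m p)"
    by (rule Op_sup) (use f g in \<open>auto simp: supp_def\<close>)
  also have "\<dots> = (\<Sum>w\<in>?S. f w * opw s r w m p) + (\<Sum>w\<in>?S. g w * opw s r w m p)"
    by (simp add: sum.distrib algebra_simps)
  also have "\<dots> = Op s r f m p + Op s r g m p"
  proof -
    have "Op s r f m p = (\<Sum>w\<in>?S. f w * opw s r w m p)" by (rule Op_sup) (use f g in auto)
    moreover have "Op s r g m p = (\<Sum>w\<in>?S. g w * opw s r w m p)" by (rule Op_sup) (use f g in auto)
    ultimately show ?thesis by simp
  qed
  finally show ?thesis .
qed

lemma Op_smult: "finite (supp f) \<Longrightarrow> Op s r (\<lambda>u. c * f u) m p = c * Op s r f m p"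
proof -
  assume f: "finite (supp f)"
  have "Op s r (\<lambda>u. c * f u) m p = (\<Sum>w\<in>supp f. (c * f w) * opw s r w m p)"
    by (rule Op_sup) (use f in \<open>auto simp: supp_def\<close>)
  also have "\<dots> = c * Op s r f m p" using f by (simp add: Op_sup sum_distrib_left algebra_simps)
  finally show ?thesis .
qed

lemma supp_mono: "supp (mono w :: _ \<Rightarrow> 'r::comm_ring_1) = {w}"
  by (rule set_eqI) (simp add: supp_def mono_def)

lemma Op_mono: "Op s r (mono w :: _ \<Rightarrow> 'r::comm_ring_1) m p = opw s r w m p"
proof -
  have "Op s r (mono w :: _ \<Rightarrow> 'r::comm_ring_1) m p = (\<Sum>u\<in>{w}. mono w u * opw s r u m p)"
    by (rule Op_sup) (simp_all add: supp_mono)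
  then show ?thesis by (simp add: mono_def)
qed

lemma Op_sum: "finite I \<Longrightarrow> (\<And>i. i\<in>I \<Longrightarrow> finite (supp (F i))) \<Longrightarrow>
   Op s r (\<lambda>u. \<Sum>i\<in>I. F i u) m p = (\<Sum>i\<in>I. Op s r (F i) m p) \<and> finite (supp (\<lambda>u. \<Sum>i\<in>I. F i u))"
proof (induction I rule: finite_induct)
  case empty then show ?case by (simp add: Op_def supp_def)
next
  case (insert x I)
  have e: "(\<lambda>u. \<Sum>i\<in>insert x I. F i u) = (\<lambda>u. F x u + (\<Sum>i\<in>I. F i u))"
    using insert by simp
  have fx: "finite (supp (F x))" using insert by simp
  have fi: "finite (supp (\<lambda>u. \<Sum>i\<in>I. F i u))" using insert by simp
  have "supp (\<lambda>u. F x u + (\<Sum>i\<in>I. F i u)) \<subseteq> supp (F x) \<union> supp (\<lambda>u. \<Sum>i\<in>I. F i u)"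
    by (auto simp: supp_def)
  then show ?case unfolding e using insert fx fi
    by (simp add: Op_add finite_subset)
qed

lemma supp_mult: "supp (fa_mult f g) \<subseteq> (\<lambda>(u,v). u@v) ` (supp f \<times> supp g)"
proof
  fix w assume "w \<in> supp (fa_mult f g)"
  then have "(\<Sum>i\<le>length w. f (take i w) * g (drop i w)) \<noteq> 0" by (simp add: supp_def fa_mult_def)
  then obtain i where "f (take i w) * g (drop i w) \<noteq> 0"
    using sum.not_neutral_contains_not_neutral by blast
  then have "(take i w, drop i w) \<in> supp f \<times> supp g" by (auto simp: supp_def)
  moreover have "w = (\<lambda>(u,v). u@v) (take i w, drop i w)" by simp
  ultimately show "w \<in> (\<lambda>(u,v). u@v) ` (supp f \<times> supp g)" by (rule rev_image_eqI)
qed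

lemma finite_supp_mult: "finite (supp f) \<Longrightarrow> finite (supp g) \<Longrightarrow> finite (supp (fa_mult f g))"
  by (rule finite_subset[OF supp_mult]) auto

lemma opw_append: "opw s r (u@v) m p = opw s r u (opw s r v m) p"
  by (simp add: opw_def tau_append split: option.split)

lemma opw_sum: "opw s r u (\<lambda>p. \<Sum>i\<in>I. F i p) p = (\<Sum>i\<in>I. opw s r u (F i) p)"
  by (simp add: opw_def split: option.split)

lemma opw_cmult: "opw s r u (\<lambda>p. c * F p) p = c * opw s r u F p"
  by (simp add: opw_def split: option.split)

lemma splits_img: "{x. fst x @ snd x = w} = (\<lambda>i. (take i w, drop i w)) ` {..length w}"
proof (rule set_eqI, rule iffI)
  fix x assume "x \<in> {x. fst x @ snd x = w}"
  then obtain a b where x: "x = (a,b)" "a @ b = w" by (cases x) auto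
  show "x \<in> (\<lambda>i. (take i w, drop i w)) ` {..length w}"
    by (rule image_eqI[of _ _ "length a"]) (use x in auto)
qed auto

lemma fin_splits: "finite {x. fst x @ snd x = w}"
  unfolding splits_img by auto

lemma split_sum: "(\<Sum>i\<le>length w. G (take i w) (drop i w)) = (\<Sum>x\<in>{x. fst x @ snd x = w}. G (fst x) (snd x))"
proof -
  have inj: "inj_on (\<lambda>i. (take i w, drop i w)) {..length w}"
  proof (rule inj_onI)
    fix i j assume "i \<in> {..length w}" "j \<in> {..length w}" "(take i w, drop i w) = (take j w, drop j w)"
    then have "length (take i w) = length (take j w)" by simp
    then show "i = j" using \<open>i \<in> _\<close> \<open>j \<in> _\<close> by simp
  qed
  show ?thesis unfolding splits_img by (simp add: sum.reindex[OF inj])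
qed

lemma Op_mult: assumes f: "finite (supp f)" and g: "finite (supp g)"
  shows "Op s r (fa_mult f g) m p = Op s r f (Op s r g m) p"
proof -
  let ?P = "supp f \<times> supp g"
  let ?S = "(\<lambda>(u,v). u@v) ` ?P"
  have fP: "finite ?P" using f g by simp
  have "Op s r (fa_mult f g) m p = (\<Sum>w\<in>?S. fa_mult f g w * opw s r w m p)"
    by (rule Op_sup) (use fP supp_mult in auto)
  also have "\<dots> = (\<Sum>w\<in>?S. \<Sum>x\<in>{x\<in>?P. fst x @ snd x = w}. f (fst x) * g (snd x) * opw s r w m p)"
  proof (rule sum.cong[OF refl])
    fix w assume "w \<in> ?S"
    have "fa_mult f g w = (\<Sum>x\<in>{x. fst x @ snd x = w}. f (fst x) * g (snd x))"
      unfolding fa_mult_def by (rule split_sum)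
    also have "\<dots> = (\<Sum>x\<in>{x\<in>?P. fst x @ snd x = w}. f (fst x) * g (snd x))"
    proof (rule sum.mono_neutral_right)
      show "finite {x. fst x @ snd x = w}" by (rule fin_splits)
    qed (auto simp: supp_def)
    finally show "fa_mult f g w * opw s r w m p = (\<Sum>x\<in>{x\<in>?P. fst x @ snd x = w}. f (fst x) * g (snd x) * opw s r w m p)"
      by (simp add: sum_distrib_right)
  qed
  also have "\<dots> = (\<Sum>w\<in>?S. \<Sum>x\<in>{x\<in>?P. (\<lambda>(u,v). u@v) x = w}. f (fst x) * g (snd x) * opw s r (fst x @ snd x) m p)"
    by (rule sum.cong[OF refl], rule sum.cong) (auto simp: case_prod_beta)
  also have "\<dots> = (\<Sum>x\<in>?P. f (fst x) * g (snd x) * opw s r (fst x @ snd x) m p)"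
    by (rule sum.group) (use fP in auto)
  also have "\<dots> = (\<Sum>u\<in>supp f. \<Sum>v\<in>supp g. f u * g v * opw s r (u @ v) m p)"
    by (simp add: sum.cartesian_product case_prod_beta)
  also have "\<dots> = (\<Sum>u\<in>supp f. f u * opw s r u (Op s r g m) p)"
  proof (rule sum.cong[OF refl])
    fix u
    have "Op s r g m = (\<lambda>p. \<Sum>v\<in>supp g. g v * opw s r v m p)"
      by (rule ext) (simp add: Op_def supp_def)
    then have "opw s r u (Op s r g m) p = opw s r u (\<lambda>p. \<Sum>v\<in>supp g. g v * opw s r v m p) p"
      by simp
    also have "\<dots> = (\<Sum>v\<in>supp g. g v * opw s r u (opw s r v m) p)"
      by (simp add: opw_sum opw_cmult)
    finally show "(\<Sum>v\<in>supp g. f u * g v * opw s r (u @ v) m p) = f u * opw s r u (Op s r g m) p"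
      by (simp add: opw_append sum_distrib_left algebra_simps)
  qed
  also have "\<dots> = Op s r f (Op s r g m) p" using f by (simp add: Op_sup)
  finally show ?thesis .
qed




lemma fin_mono: "finite (supp (mono w :: _ \<Rightarrow> 'r::comm_ring_1))"
  by (simp add: supp_mono)

lemma Op_mm: "Op s r (\<lambda>u. (mono w1 u :: 'r::comm_ring_1) - mono w2 u) m p = opw s r w1 m p - opw s r w2 m p"
  by (simp add: Op_diff fin_mono Op_mono)

lemma fin_mm: "finite (supp (\<lambda>u. (mono w1 u :: 'r::comm_ring_1) - mono w2 u))"
  by (rule finite_subset[of _ "{w1,w2}"]) (auto simp: supp_def mono_def)

lemma opw2: "opw s r [a] m p = (case pa s r a p of None \<Rightarrow> 0 | Some p' \<Rightarrow> m p')"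
  by (simp add: opw_def split: option.split)

lemma opw3: "opw s r [a,b] m p = (case pa s r a p of None \<Rightarrow> 0 | Some p' \<Rightarrow> (case pa s r b p' of None \<Rightarrow> 0 | Some p'' \<Rightarrow> m p''))"
  by (simp add: opw_def split: option.split)

lemma rel_ann:
  fixes \<rho> :: "('v,'e) gen list \<Rightarrow> 'r::comm_ring_1"
  assumes "\<rho> \<in> lpa_rels V Ed s r" 
  shows "finite (supp \<rho>) \<and> (\<forall>m q k. valid V Ed s r q \<longrightarrow> Op s r \<rho> m (q,k) = 0)"
  using assms unfolding lpa_rels_def
proof (elim CollectE disjE bexE exE conjE)
  fix v w assume "v \<in> V" "w \<in> V" and rho: "\<rho> = (\<lambda>u. mono [GV v, GV w] u - (if v = w then mono [GV v] u else 0))"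
  show ?thesis
  proof (cases "v = w")
    case True
    then show ?thesis using rho by (auto simp: fin_mm Op_mm opw3 opw2)
  next
    case False
    then have "\<rho> = mono [GV v, GV w]" using rho by auto
    then show ?thesis using False by (auto simp: fin_mono Op_mono opw3)
  qed
next
  fix e assume "e \<in> Ed" "\<rho> = (\<lambda>u. mono [GV (s e), GE e] u - mono [GE e] u)"
  then show ?thesis
    by (auto simp: fin_mm Op_mm opw3 opw2 split: option.split dest: bhd_src)
next
  fix e assume "e \<in> Ed" "\<rho> = (\<lambda>u. mono [GE e, GV (r e)] u - mono [GE e] u)"
  then show ?thesis
    by (auto simp: fin_mm Op_mm opw3 opw2 split: option.split dest: valid_bhd)
next
  fix e assume "e \<in> Ed" "\<rho> = (\<lambda>u. mono [GV (r e), GS e] u - mono [GS e] u)"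
  then show ?thesis
    by (auto simp: fin_mm Op_mm opw3 opw2)
next
  fix e assume "e \<in> Ed" "\<rho> = (\<lambda>u. mono [GS e, GV (s e)] u - mono [GS e] u)"
  then show ?thesis
    by (auto simp: fin_mm Op_mm opw3 opw2)
next
  fix e f assume "e \<in> Ed" "f \<in> Ed" and rho: "\<rho> = (\<lambda>u. mono [GS e, GE f] u - (if e = f then mono [GV (r e)] u else 0))"
  show ?thesis
  proof (cases "e = f")
    case True
    then show ?thesis using rho by (auto simp: fin_mm Op_mm opw3 opw2)
  next
    case False
    then have "\<rho> = mono [GS e, GE f]" using rho by auto
    then show ?thesis using False by (auto simp: fin_mono Op_mono opw3)
  qed
next
  fix v assume reg: "regular_vertex V Ed s v"
    and rho: "\<rho> = (\<lambda>u. mono [GV v] u - (\<Sum>e\<in>{e \<in> Ed. s e = v}. mono [GE e, GS e] u))"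
  let ?F = "{e \<in> Ed. s e = v}"
  have fF: "finite ?F" using reg by (simp add: regular_vertex_def)
  have sm: "Op s r (\<lambda>u. \<Sum>e\<in>?F. mono [GE e, GS e] u) m p = (\<Sum>e\<in>?F. Op s r (mono [GE e, GS e]) m p)
     \<and> finite (supp (\<lambda>u::('v,'e) gen list. (\<Sum>e\<in>?F. mono [GE e, GS e] u) :: 'r))" for m :: "('v,'e) pt \<Rightarrow> 'r" and p
    by (rule Op_sum[where F="\<lambda>e. (mono [GE e, GS e] :: ('v,'e) gen list \<Rightarrow> 'r)", OF fF]) (simp add: fin_mono)
  have "Op s r \<rho> m (q,k) = 0" if vq: "valid V Ed s r q" for m q k
  proof -
    have "Op s r \<rho> m (q,k) = opw s r [GV v] m (q,k) - (\<Sum>e\<in>?F. opw s r [GE e, GS e] m (q,k))"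
      unfolding rho by (simp add: Op_diff fin_mono sm Op_mono)
    also have "\<dots> = 0"
    proof (cases "bsrc s q = v")
      case True
      with valid_reg[OF vq] reg obtain e0 q' where h: "bhd q = Some (e0,q')" by fastforce
      from valid_bhd[OF vq h] have e0: "e0 \<in> Ed" "r e0 = bsrc s q'" by auto
      have "s e0 = v" using bhd_src[OF h] True by simp
      have q: "q = bcons e0 q'" using bhd_Some[OF h] .
      have "(\<Sum>e\<in>?F. opw s r [GE e, GS e] m (q,k)) = (\<Sum>e\<in>?F. if e = e0 then m (q,k) else 0)"
        by (rule sum.cong[OF refl]) (use h e0 q in \<open>auto simp: opw3\<close>)
      also have "\<dots> = m (q,k)" using fF e0 \<open>s e0 = v\<close> by simp
      finally show ?thesis using True by (simp add: opw2)
    next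
      case False
      have "(\<Sum>e\<in>?F. opw s r [GE e, GS e] m (q,k)) = 0"
        by (rule sum.neutral) (use False in \<open>auto simp: opw3 split: option.split dest: bhd_src\<close>)
      then show ?thesis using False by (simp add: opw2)
    qed
    finally show ?thesis .
  qed
  moreover have "finite (supp \<rho>)"
  proof -
    have "supp \<rho> \<subseteq> supp (mono [GV v] :: _ \<Rightarrow> 'r) \<union> supp (\<lambda>u::('v,'e) gen list. (\<Sum>e\<in>?F. mono [GE e, GS e] u) :: 'r)"
      unfolding rho by (auto simp: supp_def)
    then show ?thesis using sm fin_mono by (meson finite_Un finite_subset)
  qed
  ultimately show ?thesis by blast
qed

lemma ideal_ann:
  assumes "z \<in> lpa_ideal V Ed s r"
  shows "finite (supp z) \<and> (\<forall>m q k. valid V Ed s r q \<longrightarrow> Op s r z m (q,k) = 0)"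
  using assms
proof (induction rule: lpa_ideal.induct)
  case zero
  then show ?case by (simp add: supp_def Op_def)
next
  case (gen \<rho> a b c)
  from rel_ann[OF gen(1)] have fr: "finite (supp \<rho>)" and ar: "\<And>m q k. valid V Ed s r q \<Longrightarrow> Op s r \<rho> m (q,k) = 0"
    by auto
  have f1: "finite (supp (fa_mult (mono a) \<rho>))" by (simp add: finite_supp_mult fin_mono fr)
  have f2: "finite (supp (fa_mult (fa_mult (mono a) \<rho>) (mono b)))" by (simp add: finite_supp_mult fin_mono f1)
  have "Op s r (\<lambda>u. c * fa_mult (fa_mult (mono a) \<rho>) (mono b) u) m (q,k) = 0" if vq: "valid V Ed s r q" for m q k
  proof -
    have "Op s r (\<lambda>u. c * fa_mult (fa_mult (mono a) \<rho>) (mono b) u) m (q,k)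
       = c * opw s r a (Op s r \<rho> (Op s r (mono b) m)) (q,k)"
      by (simp add: Op_smult f2 Op_mult f1 fin_mono fr Op_mono)
    also have "\<dots> = 0"
    proof (cases "tau s r a (q,k)")
      case (Some p')
      obtain q' k' where p': "p' = (q',k')" by (cases p')
      have "valid V Ed s r q'" using tau_valid[OF Some[unfolded p'] vq gen(2)] .
      then show ?thesis using Some p' ar by (simp add: opw_def)
    qed (simp add: opw_def)
    finally show ?thesis .
  qed
  moreover have "finite (supp (\<lambda>u. c * fa_mult (fa_mult (mono a) \<rho>) (mono b) u))"
    by (rule finite_subset[OF _ f2]) (auto simp: supp_def)
  ultimately show ?case by blast
next
  case (add x y)
  then show ?case
    by (auto simp: Op_add intro: finite_subset[of _ "supp x \<union> supp y"] simp: supp_def)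
qed




lemma tele:
  fixes g :: "int \<Rightarrow> 'r::comm_ring_1"
  assumes n: "N > 0" and eq: "\<And>k. (if 0 \<le> k \<and> k < N then 1 else 0) = g k - g (k - N)"
    and bd: "\<And>k. \<bar>k\<bar> > L \<Longrightarrow> g k = 0"
  shows False
proof -
  have neg: "g (- int j * N - N) = g (-N)" for j :: nat
  proof (induction j)
    case (Suc j)
    have "int (Suc j) * N > 0" using n by simp
    then have "\<not> 0 \<le> - int (Suc j) * N" by linarith
    then have "(0::'r) = g (- int (Suc j) * N) - g (- int (Suc j) * N - N)"
      using eq[of "- int (Suc j) * N"] by simp
    moreover have "- int (Suc j) * N = - int j * N - N" by (simp add: algebra_simps)
    ultimately show ?case using Suc by simp
  qed simp
  define J where "J = nat \<bar>L\<bar> + 1"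
  have JN: "int J * N \<ge> int J" using n mult_le_cancel_left1 by fastforce
  have "\<bar>- int J * N - N\<bar> > L" using JN n unfolding J_def by linarith
  then have "g (-N) = 0" using neg[of J] bd by simp
  then have g0: "g 0 = 1" using eq[of 0] n by simp
  have pos: "g (int j * N) = 1" for j :: nat
  proof (induction j)
    case (Suc j)
    have "int (Suc j) * N \<ge> N" using n by simp
    then have "(0::'r) = g (int (Suc j) * N) - g (int (Suc j) * N - N)"
      using eq[of "int (Suc j) * N"] by simp
    moreover have "int (Suc j) * N - N = int j * N" by (simp add: algebra_simps)
    ultimately show ?case using Suc by simp
  qed (simp add: g0)
  have "\<bar>int J * N\<bar> > L" using JN n unfolding J_def by linarith
  then have "g (int J * N) = 0" using bd by simp
  then show False using pos[of J] by simp
qed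

lemma exists_bp: "\<exists>q. valid V Ed s r q \<and> bsrc s q = v"
proof (rule ccontr)
  define B where "B u = (\<not> (\<exists>q. valid V Ed s r q \<and> bsrc s q = u))" for u
  assume "\<not> ?thesis"
  then have Bv: "B v" by (simp add: B_def)
  have reg: "regular_vertex V Ed s u" if "B u" for u
  proof (rule ccontr)
    assume "\<not> regular_vertex V Ed s u"
    then have "valid V Ed s r (Fin u [])" by (simp add: valid_def)
    then show False using that by (auto simp: B_def)
  qed
  have Bstep: "B (r e)" if "B u" "e \<in> Ed" "s e = u" for u e
  proof (rule ccontr)
    assume "\<not> B (r e)"
    then obtain q where "valid V Ed s r q" "bsrc s q = r e" by (auto simp: B_def)
    then have "valid V Ed s r (bcons e q)" using that valid_bcons by metis
    then show False using that by (auto simp: B_def)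
  qed
  define ch where "ch u = (SOME e. e \<in> Ed \<and> s e = u)" for u
  have ch: "ch u \<in> Ed \<and> s (ch u) = u" if "B u" for u
  proof -
    from reg[OF that] have "{e \<in> Ed. s e = u} \<noteq> {}"
      unfolding regular_vertex_def by (auto simp: card_gt_0_iff)
    then have "\<exists>e. e \<in> Ed \<and> s e = u" by auto
    then show ?thesis unfolding ch_def by (rule someI_ex)
  qed
  define vs where "vs = rec_nat v (\<lambda>_ u. r (ch u))"
  have vs0: "vs 0 = v" and vsS: "vs (Suc i) = r (ch (vs i))" for i by (simp_all add: vs_def)
  have Bvs: "B (vs i)" for i
  proof (induction i)
    case 0 then show ?case using Bv vs0 by simp
  next
    case (Suc i) then show ?case using Bstep ch vsS by metis
  qed
  have "\<forall>i. ch (vs i) \<in> Ed \<and> r (ch (vs i)) = s (ch (vs (Suc i)))"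
  proof
    fix i show "ch (vs i) \<in> Ed \<and> r (ch (vs i)) = s (ch (vs (Suc i)))"
      using ch[OF Bvs, of i] ch[OF Bvs, of "Suc i"] vsS[of i] by simp
  qed
  then have "valid V Ed s r (Inf (\<lambda>i. ch (vs i)))" by (simp add: valid_def)
  moreover have "bsrc s (Inf (\<lambda>i. ch (vs i))) = v" using ch[OF Bvs, of 0] vs0 by simp
  ultimately show False using Bv by (auto simp: B_def)
qed

lemma Op_ideal_eq:
  assumes x: "finite (supp x)" and y: "finite (supp y)"
    and z: "(\<lambda>u. x u - fa_mult (fa_mult x y) x u) \<in> lpa_ideal V Ed s r"
    and vq: "valid V Ed s r q"
  shows "Op s r x m (q,k) = Op s r x (Op s r y (Op s r x m)) (q,k)"
proof -
  have fxy: "finite (supp (fa_mult x y))" using x y by (rule finite_supp_mult)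
  have fxyx: "finite (supp (fa_mult (fa_mult x y) x))" using fxy x by (rule finite_supp_mult)
  have "0 = Op s r (\<lambda>u. x u - fa_mult (fa_mult x y) x u) m (q,k)"
    using ideal_ann[OF z] vq by simp
  also have "\<dots> = Op s r x m (q,k) - Op s r x (Op s r y (Op s r x m)) (q,k)"
    by (simp add: Op_diff x fxyx Op_mult fxy y)
  finally show ?thesis by simp
qed

lemma tau_GE: "(\<forall>i<length l. p i = l ! i) \<Longrightarrow>
   tau s r (map GE l) (Inf p, k) = Some (Inf (\<lambda>i. p (i + length l)), k - int (length l))"
proof (induction l arbitrary: p k)
  case (Cons e l)
  have "\<forall>i<length l. p (Suc i) = l ! i" using Cons.prems by auto
  from Cons.IH[OF this, of "k - 1"] Cons.prems show ?case
    by (auto simp: algebra_simps)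
qed simp




lemma part1:
  fixes V :: "'v set" and Ed :: "'e set" and s r :: "'e \<Rightarrow> 'v"
  assumes "V \<noteq> {}" and vnr: "lpa_vnr TYPE('r::comm_ring_1) V Ed s r"
  shows "vnr_ring TYPE('r)"
  unfolding vnr_ring_def
proof
  fix a :: 'r
  obtain v where v: "v \<in> V" using assms by auto
  define x where "x = (\<lambda>u::('v,'e) gen list. a * mono [GV v] u)"
  have sx: "supp x \<subseteq> {[GV v]}" by (auto simp: x_def supp_def mono_def split: if_splits)
  then have fx: "finite (supp x)" by (rule finite_subset) simp
  have xin: "x \<in> free_alg V Ed"
    unfolding free_alg_def using fx sx v by (auto simp: supp_def gens_def)
  have "\<exists>y\<in>free_alg V Ed. (\<lambda>u. x u - fa_mult (fa_mult x y) x u) \<in> lpa_ideal V Ed s r"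
    using vnr[unfolded lpa_vnr_def] xin by (rule bspec)
  then obtain y where y: "y \<in> free_alg V Ed" and z: "(\<lambda>u. x u - fa_mult (fa_mult x y) x u) \<in> lpa_ideal V Ed s r"
    by (elim bexE)
  have fy: "finite (supp y)" using y by (simp add: free_alg_def supp_def)
  obtain q where q: "valid V Ed s r q" "bsrc s q = v" using exists_bp[of V Ed s r v] by (elim exE conjE)
  define m :: "('v,'e) pt \<Rightarrow> 'r" where "m = (\<lambda>p. if p = (q,0) then (1::'r) else 0)"
  have Opx: "Op s r x G p = a * opw s r [GV v] G p" for G p
    unfolding x_def by (simp add: Op_smult fin_mono Op_mono)
  have xm: "Op s r x m = (\<lambda>p. a * m p)"
    by (rule ext) (auto simp: Opx opw2 m_def q split: prod.split if_splits)
  define b where "b = (\<Sum>w\<in>supp y. y w * opw s r w m (q,0))"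
  have "Op s r y (\<lambda>p. a * m p) (q,0) = a * b"
    unfolding Op_def b_def supp_def by (simp add: opw_cmult sum_distrib_left algebra_simps)
  then have "Op s r x (Op s r y (Op s r x m)) (q,0) = a * (a * b)"
    by (simp add: xm Opx opw2 q)
  moreover have "Op s r x m (q,0) = a" unfolding xm by (simp add: m_def)
  ultimately have "a = a * (a * b)" using Op_ideal_eq[OF fx fy z q(1), of m 0] by simp
  then show "\<exists>b. a = a * b * a" by (auto simp: algebra_simps)
qed

lemma part2:
  fixes V :: "'v set" and Ed :: "'e set" and s r :: "'e \<Rightarrow> 'v"
  assumes EV: "\<forall>e\<in>Ed. s e \<in> V \<and> r e \<in> V" and vnr: "lpa_vnr TYPE('r::comm_ring_1) V Ed s r"
    and cyc: "is_cycle Ed s r es"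
  shows False
proof -
  define n where "n = length es"
  have ne: "es \<noteq> []" and sub: "set es \<subseteq> Ed"
    and path: "\<And>i. Suc i < n \<Longrightarrow> r (es ! i) = s (es ! Suc i)"
    and clo: "s (hd es) = r (last es)" using cyc by (auto simp: is_cycle_def n_def)
  have n0: "n > 0" using ne by (simp add: n_def)
  define v where "v = s (hd es)"
  have vV: "v \<in> V" using EV sub ne hd_in_set[OF ne] unfolding v_def by blast
  define c :: "('v,'e) gen list" where "c = map GE es"
  define x where "x = (\<lambda>u::('v,'e) gen list. (mono [GV v] u :: 'r) - mono c u)"
  have sx: "supp x \<subseteq> {[GV v], c}" by (auto simp: x_def supp_def mono_def split: if_splits)
  then have fx: "finite (supp x)" by (rule finite_subset) simp
  have xin: "x \<in> free_alg V Ed"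
  proof -
    have "w \<noteq> [] \<and> set w \<subseteq> gens V Ed" if "x w \<noteq> 0" for w
    proof -
      have "w = [GV v] \<or> w = c" using sx that by (auto simp: supp_def)
      then show ?thesis using vV ne sub by (auto simp: gens_def c_def image_iff subset_iff)
    qed
    then show ?thesis unfolding free_alg_def using fx by (auto simp: supp_def)
  qed
  have "\<exists>y\<in>free_alg V Ed. (\<lambda>u. x u - fa_mult (fa_mult x y) x u) \<in> lpa_ideal V Ed s r"
    using vnr[unfolded lpa_vnr_def] xin by (rule bspec)
  then obtain y where y: "y \<in> free_alg V Ed" and z: "(\<lambda>u. x u - fa_mult (fa_mult x y) x u) \<in> lpa_ideal V Ed s r"
    by (elim bexE)
  have fy: "finite (supp y)" using y by (simp add: free_alg_def supp_def)
  define pp where "pp i = es ! (i mod n)" for i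
  define q :: "('v,'e) bp" where "q = Inf pp"
  have vq: "valid V Ed s r q"
    unfolding q_def valid_def
  proof (simp, intro allI conjI)
    fix i
    show "pp i \<in> Ed" using sub n0 unfolding pp_def n_def by auto
    show "r (pp i) = s (pp (Suc i))"
    proof (cases "Suc (i mod n) < n")
      case True
      then have "Suc i mod n = Suc (i mod n)" by (simp add: mod_Suc)
      then show ?thesis using path[OF True] by (simp add: pp_def)
    next
      case False
      moreover have "i mod n < n" using n0 by simp
      ultimately have "i mod n = n - 1" by linarith
      moreover have "Suc i mod n = 0" using False n0 \<open>i mod n = n - 1\<close> by (simp add: mod_Suc)
      ultimately show ?thesis using clo ne
        by (simp add: pp_def last_conv_nth hd_conv_nth n_def)
    qed
  qed
  have bq: "bsrc s q = v" using ne n0 by (simp add: q_def pp_def v_def hd_conv_nth)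
  have ppn: "(\<lambda>i. pp (i + n)) = pp" by (rule ext) (simp add: pp_def)
  have tc: "tau s r c (q,k) = Some (q, k - int n)" for k
  proof -
    have "\<forall>i<length es. pp i = es ! i" by (simp add: pp_def n_def)
    from tau_GE[OF this, of s r k] show ?thesis unfolding c_def q_def n_def[symmetric] ppn .
  qed
  have Opx: "Op s r x G p = opw s r [GV v] G p - opw s r c G p" for G p
    unfolding x_def by (rule Op_mm)
  have Opxq: "Op s r x G (q,k) = G (q,k) - G (q, k - int n)" for G k
    by (simp add: Opx opw2 opw_def tc bq)
  define f :: "('v,'e) pt \<Rightarrow> 'r" where "f = (\<lambda>p. if fst p = q \<and> snd p \<ge> 0 then (1::'r) else 0)"
  define h where "h = Op s r x f"
  have hq: "h (q,k) = (if 0 \<le> k \<and> k < int n then 1 else 0)" for k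
    by (simp add: h_def Opxq f_def)
  have hoff: "h (q1,k1) = 0" if "q1 \<noteq> q" for q1 k1
  proof -
    have "opw s r c f (q1,k1) = 0"
    proof (cases "tau s r c (q1,k1)")
      case (Some p')
      show ?thesis
      proof (cases "f p' = 0")
        case False
        then obtain k' where p': "p' = (q,k')" by (cases p') (auto simp: f_def split: if_splits)
        have "tau s r c (q, k' + int n) = Some p'" using tc[of "k' + int n"] p' by simp
        then have "(q1,k1) = (q, k' + int n)" by (rule tau_inj[OF Some])
        then show ?thesis using that by simp
      qed (simp add: opw_def Some)
    qed (simp add: opw_def)
    then show ?thesis using that by (simp add: h_def Opx opw2 f_def split: option.split)
  qed
  have hnz: "\<exists>k'. p = (q,k') \<and> 0 \<le> k' \<and> k' < int n" if "h p \<noteq> 0" for p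
  proof -
    obtain q1 k1 where p: "p = (q1,k1)" by (cases p)
    then have "q1 = q" using hoff that by blast
    then show ?thesis using that p hq by (auto split: if_splits)
  qed
  define g where "g k = Op s r y h (q,k)" for k
  define L where "L = (\<Sum>w\<in>supp y. int (length w)) + int n"
  have eq: "(if 0 \<le> k \<and> k < int n then 1 else 0) = g k - g (k - int n)" for k
  proof -
    have "h (q,k) = Op s r x (Op s r y h) (q,k)"
      using Op_ideal_eq[OF fx fy z vq, of f k] unfolding h_def by simp
    then show ?thesis by (simp add: hq Opxq g_def)
  qed
  have bd: "g k = 0" if kL: "\<bar>k\<bar> > L" for k
  proof -
    have "g k = (\<Sum>w\<in>supp y. y w * opw s r w h (q,k))"
      unfolding g_def Op_def supp_def ..
    also have "\<dots> = 0"
    proof (rule sum.neutral, rule ballI)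
      fix w assume w: "w \<in> supp y"
      have "opw s r w h (q,k) = 0"
      proof (cases "tau s r w (q,k)")
        case (Some p')
        obtain q1 k1 where p': "p' = (q1,k1)" by (cases p')
        have dg: "\<bar>k1 - k\<bar> \<le> int (length w)" using tau_deg[OF Some[unfolded p']] .
        have "int (length w) \<le> (\<Sum>w\<in>supp y. int (length w))"
          by (rule member_le_sum) (use w fy in auto)
        have "h p' = 0"
        proof (rule ccontr)
          assume "h p' \<noteq> 0"
          from hnz[OF this] p' have "0 \<le> k1" "k1 < int n" by auto
          with dg \<open>int (length w) \<le> _\<close> kL show False unfolding L_def by linarith
        qed
        then show ?thesis using Some by (simp add: opw_def)
      qed (simp add: opw_def)
      then show "y w * opw s r w h (q,k) = 0" by simp
    qed
    finally show ?thesis .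
  qed
  show False using tele[of "int n" g L] n0 eq bd by simp
qed



theorem mainTheorem13:
  fixes V :: "'v set" and Ed :: "'e set" and src rng :: "'e \<Rightarrow> 'v"
  assumes "\<forall>e\<in>Ed. src e \<in> V \<and> rng e \<in> V"
    and "V \<noteq> {}"
    and "lpa_vnr TYPE('r::comm_ring_1) V Ed src rng"
  shows "vnr_ring TYPE('r) \<and> \<not> (\<exists>es. is_cycle Ed src rng es)"
  using part1[OF assms(2,3)] part2[OF assms(1,3)] by blast

end
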